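(* Let $k\ge2$ be an integer and $\Gamma_k(t)=\Psi_k(t^3-t^2+7t+1)\in\mathbb{Q}[t]$. Then the map $\alpha\mapsto-\alpha^2-7$ is a $\operatorname{Gal}(\overline{\mathbb{Q}}/\mathbb{Q})$-equivariant bijection from the set of complex roots of $\Gamma_k$ to the set of complex roots of $\widetilde{\Delta}_{3k,3}$. In particular, $\widetilde{\Delta}_{3k,3}$ is irreducible over $\mathbb{Q}$ if and only if $\Gamma_k$ is irreducible over $\mathbb{Q}$.
   Context: $\Psi_k$ denotes the $k$-th cyclotomic polynomial. For the family $f_c(z)=z^2+c$, let $\delta_3(x,c)$ be the third multiplier polynomial (the polynomial monic in $x$ with $\delta_3(x,c)^3=\operatorname{Res}_z(\Phi_3^*(z,c),x-(f_c^{\circ3})'(z))$, where $\Phi_3^*(z,c)=(f_c^{\circ3}(z)-z)/(f_c(z)-z)$); explicitly $\delta_3(x,C/4)=x^2-(2C+16)x+(C^3+8C^2+16C+64)$. Set $\widetilde{\Delta}_{3k,3}(C)=\operatorname{Res}_x(\Psi_k(x),\delta_3(x,C/4))\in\mathbb{Z}[C]$. Roots are taken without multiplicity. *)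

theory Defs
  imports Complex_Main "HOL-Computational_Algebra.Polynomial" "Subresultants.Resultant_Prelim"
begin

text \<open>The k-th cyclotomic polynomial, via the recursion x^k - 1 = prod over d dvd k of Psi_d
  (Psi_0 is set to 1 by convention; it is never used).\<close>
function cyclotomic :: "nat \<Rightarrow> rat poly" where
  "cyclotomic k = (if k = 0 then 1 else
     (monom 1 k - 1) div (\<Prod>d\<in>{d. d dvd k \<and> d < k}. cyclotomic d))"
  by auto
termination
  by (relation "measure id") auto

definition Gamma :: "nat \<Rightarrow> rat poly" where
  "Gamma k = pcompose (cyclotomic k) [:1, 7, -1, 1:]"

definition varC :: "rat poly" where "varC = [:0, 1:]"

text \<open>delta_3(x, C/4) = x^2 - (2C+16) x + (C^3+8C^2+16C+64), a polynomial in x with coefficients in Q[C].\<close>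
definition delta3 :: "rat poly poly" where
  "delta3 = [: varC^3 + 8*varC^2 + 16*varC + 64, -(2*varC + 16), 1 :]"

definition Delta_tilde :: "nat \<Rightarrow> rat poly" where
  "Delta_tilde k = resultant (map_poly (\<lambda>a. [:a:]) (cyclotomic k)) delta3"

definition complex_roots :: "rat poly \<Rightarrow> complex set" where
  "complex_roots p = {z. poly (map_poly of_rat p) z = 0}"

text \<open>Gal(Qbar/Q): field automorphisms of the algebraic closure of Q inside C.\<close>
definition galois_Qbar :: "(complex \<Rightarrow> complex) set" where
  "galois_Qbar = {\<sigma>. bij_betw \<sigma> {z. algebraic z} {z. algebraic z} \<and>
     (\<forall>x\<in>{z. algebraic z}. \<forall>y\<in>{z. algebraic z}. \<sigma> (x + y) = \<sigma> x + \<sigma> y \<and> \<sigma> (x * y) = \<sigma> x * \<sigma> y)}"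

end

theory Submission imports Defs "HOL-Computational_Algebra.Fundamental_Theorem_Algebra" "HOL-Computational_Algebra.Polynomial_Factorial" "HOL-Computational_Algebra.Field_as_Ring" begin
declare cyclotomic.simps[simp del]

definition prim :: "nat \<Rightarrow> complex set" where
  "prim k = {z. z ^ k = 1 \<and> (\<forall>j. 0 < j \<and> j < k \<longrightarrow> z ^ j \<noteq> 1)}"

lemma xn1_prod:
  assumes "n > 0"
  shows "(monom 1 n - 1 :: complex poly) = (\<Prod>z\<in>{z. z ^ n = 1}. [:-z, 1:])"
proof -
  define p :: "complex poly" where "p = monom 1 n - 1"
  have pe: "p = (-1) + monom 1 n" unfolding p_def by simp
  have lc: "lead_coeff p = 1" unfolding pe using assms
    by (subst lead_coeff_add_le) (auto simp: degree_monom_eq)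
  have rt: "poly p z = 0 \<longleftrightarrow> z ^ n = 1" for z unfolding p_def by (simp add: poly_monom)
  have "rsquarefree p"
    unfolding rsquarefree_roots
  proof (intro allI notI)
    fix z assume h: "poly p z = 0 \<and> poly (pderiv p) z = 0"
    then have "z ^ n = 1" using rt by auto
    then have "z \<noteq> 0" using assms by (auto simp: power_0_left)
    moreover have "of_nat n * z ^ (n - 1) = 0" using h unfolding p_def
      by (simp add: pderiv_diff pderiv_monom poly_monom)
    ultimately show False using assms by simp
  qed
  from complex_poly_decompose_rsquarefree[OF this]
  have e: "p = (\<Prod>z | poly p z = 0. [:-z, 1:])" using lc by simp
  have s: "{z. poly p z = 0} = {z. z ^ n = 1}" using rt by auto
  show ?thesis using e[unfolded s] unfolding p_def .
qed

lemma prim_sub: "prim k \<subseteq> {z. z ^ k = 1}" unfolding prim_def by auto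

lemma prim_disj:
  assumes "0 < d" "0 < e" "d \<noteq> e" shows "prim d \<inter> prim e = {}"
proof (rule ccontr)
  assume "prim d \<inter> prim e \<noteq> {}"
  then obtain z where zz: "z \<in> prim d" "z \<in> prim e" by blast
  have z: "z ^ d = 1" "\<forall>j. 0 < j \<and> j < d \<longrightarrow> z ^ j \<noteq> 1"
    "z ^ e = 1" "\<forall>j. 0 < j \<and> j < e \<longrightarrow> z ^ j \<noteq> 1" using zz unfolding prim_def by simp_all
  from assms(3) have "d < e \<or> e < d" by arith
  then show False
  proof
    assume "d < e" then show False using z(4)[rule_format, of d] z(1) assms(1) by simp
  next
    assume "e < d" then show False using z(2)[rule_format, of e] z(3) assms(2) by simp
  qed
qed

lemma roots_union:
  assumes "k > 0"
  shows "{z. z ^ k = 1} = (\<Union>d\<in>{d. d dvd k}. prim d)"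
proof
  show "(\<Union>d\<in>{d. d dvd k}. prim d) \<subseteq> {z. z ^ k = 1}"
  proof
    fix z assume "z \<in> (\<Union>d\<in>{d. d dvd k}. prim d)"
    then obtain d where d: "d dvd k" "z \<in> prim d" by blast
    then obtain c where c: "k = d * c" by (elim dvdE)
    have "z ^ d = 1" using d(2) unfolding prim_def by simp
    then have "z ^ k = 1" unfolding c by (simp add: power_mult)
    then show "z \<in> {z. z ^ k = 1}" by simp
  qed
next
  show "{z. z ^ k = 1} \<subseteq> (\<Union>d\<in>{d. d dvd k}. prim d)"
  proof
    fix z :: complex assume "z \<in> {z. z ^ k = 1}"
    then have zk: "z ^ k = 1" by simp
    define d where "d = (LEAST d. 0 < d \<and> z ^ d = 1)"
    have ex: "0 < k \<and> z ^ k = 1" using assms zk by simp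
    have d: "0 < d" "z ^ d = 1" using LeastI[of "\<lambda>d. 0 < d \<and> z ^ d = 1", OF ex] unfolding d_def by auto
    have dmin: "z ^ j \<noteq> 1" if "0 < j" "j < d" for j
      using not_less_Least[of j "\<lambda>d. 0 < d \<and> z ^ d = 1"] that unfolding d_def by auto
    have "z ^ k = z ^ (d * (k div d) + k mod d)" by (simp only: mult_div_mod_eq)
    also have "\<dots> = (z ^ d) ^ (k div d) * z ^ (k mod d)" by (simp only: power_add power_mult)
    finally have zm: "z ^ (k mod d) = 1" using zk d by simp
    have "k mod d = 0"
    proof (rule ccontr)
      assume "k mod d \<noteq> 0"
      then have "0 < k mod d" "k mod d < d" using d(1) by simp_all
      then show False using dmin zm by blast
    qed
    then have "d dvd k" by auto
    moreover have "z \<in> prim d" unfolding prim_def using d dmin by auto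
    ultimately show "z \<in> (\<Union>d\<in>{d. d dvd k}. prim d)" by auto
  qed
qed

lemma finite_prim:
  assumes "0 < k" shows "finite (prim k)"
proof -
  have "finite {z::complex. z ^ k = 1}" by (rule finite_roots_unity) (use assms in simp)
  then show ?thesis by (rule finite_subset[OF prim_sub])
qed

lemma cyclotomic_complex:
  assumes "k > 0"
  shows "map_poly of_rat (cyclotomic k) = (\<Prod>z\<in>prim k. [:-z, 1:])"
  using assms
proof (induction k rule: less_induct)
  case (less k)
  define D where "D = {d. d dvd k \<and> d < k}"
  define U where "U = {z::complex. z ^ k = 1}"
  have finU: "finite U" unfolding U_def using finite_roots_unity[of k] less.prems by auto
  have finD: "finite D" unfolding D_def by auto
  have Dpos: "d \<in> D \<Longrightarrow> 0 < d" for d unfolding D_def using less.prems by (auto intro: Nat.gr0I)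
  have cyc: "cyclotomic k = (monom 1 k - 1) div (\<Prod>d\<in>D. cyclotomic d)"
    using less.prems by (subst cyclotomic.simps) (simp add: D_def)
  have "map_poly (of_rat :: rat \<Rightarrow> complex) (\<Prod>d\<in>D. cyclotomic d) = (\<Prod>d\<in>D. map_poly of_rat (cyclotomic d))"
  proof -
    interpret m: map_poly_comm_ring_hom "of_rat :: rat \<Rightarrow> complex" ..
    show ?thesis using m.hom_prod[of cyclotomic D] by simp
  qed
  also have "\<dots> = (\<Prod>d\<in>D. \<Prod>z\<in>prim d. [:-z, 1:])"
    by (intro prod.cong refl less.IH) (auto simp: D_def Dpos)
  also have "\<dots> = (\<Prod>z\<in>(\<Union>d\<in>D. prim d). [:-z, 1:])"
  proof -
    have disj: "\<forall>i\<in>D. \<forall>j\<in>D. i \<noteq> j \<longrightarrow> prim i \<inter> prim j = {}" using prim_disj Dpos by blast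
    show ?thesis by (rule prod.UNION_disjoint[symmetric]) (use finD finite_prim Dpos disj in auto)
  qed
  also have "(\<Union>d\<in>D. prim d) = U - prim k"
  proof -
    have "U = (\<Union>d\<in>{d. d dvd k}. prim d)" unfolding U_def by (rule roots_union[OF less.prems])
    also have "{d. d dvd k} = insert k D" unfolding D_def using less.prems
      by (auto dest: dvd_imp_le)
    finally have "U = prim k \<union> (\<Union>d\<in>D. prim d)" by simp
    moreover have "prim k \<inter> (\<Union>d\<in>D. prim d) = {}"
      using prim_disj[of k] Dpos less.prems unfolding D_def by blast
    ultimately show ?thesis by blast
  qed
  finally have Q: "map_poly of_rat (\<Prod>d\<in>D. cyclotomic d) = (\<Prod>z\<in>U - prim k. [:-z, 1:])" .
  have X: "(monom 1 k - 1 :: complex poly) = (\<Prod>z\<in>U - prim k. [:-z, 1:]) * (\<Prod>z\<in>prim k. [:-z, 1:])"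
    unfolding xn1_prod[OF less.prems] U_def[symmetric]
    by (rule prod.subset_diff) (use prim_sub finU in \<open>auto simp: U_def\<close>)
  have nz: "(\<Prod>z\<in>U - prim k. [:-z, 1:]) \<noteq> (0 :: complex poly)"
    using finU by (auto simp: prod_zero_iff)
  have "map_poly of_rat (cyclotomic k) = map_poly of_rat (monom 1 k - 1) div map_poly of_rat (\<Prod>d\<in>D. cyclotomic d)"
    unfolding cyc by (rule of_rat_hom.map_poly_div)
  also have "map_poly of_rat (monom 1 k - 1 :: rat poly) = (monom 1 k - 1 :: complex poly)"
  proof -
    interpret m: map_poly_comm_ring_hom "of_rat :: rat \<Rightarrow> complex" ..
    show ?thesis by (simp add: m.hom_minus)
  qed
  finally show ?case unfolding Q X using nz by simp
qed

lemma cyclotomic_roots: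
  assumes "k > 0"
  shows "poly (map_poly of_rat (cyclotomic k)) z = 0 \<longleftrightarrow> z \<in> prim k"
proof -
  have "poly (\<Prod>w\<in>prim k. [:-w, 1:]) z = (\<Prod>w\<in>prim k. z - w)" by (simp add: poly_prod)
  also have "\<dots> = 0 \<longleftrightarrow> (\<exists>w\<in>prim k. z - w = 0)" by (rule prod_zero_iff[OF finite_prim[OF assms]])
  finally show ?thesis unfolding cyclotomic_complex[OF assms] by auto
qed


lemma det2: fixes A :: "'a::comm_ring_1 mat" assumes "A \<in> carrier_mat 2 2"
  shows "det A = A$$(0,0) * A$$(1,1) - A$$(0,1) * A$$(1,0)"
proof -
  have "det A = (\<Sum>i<2. A $$ (i,0) * cofactor A i 0)" by (rule laplace_expansion_column[OF assms]) auto
  also have "\<dots> = A$$(0,0) * A$$(1,1) - A$$(0,1) * A$$(1,0)"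
    using assms by (simp add: cofactor_def numeral_2_eq_2 det_single mat_delete_def)
  finally show ?thesis .
qed

lemma sum_rev_poly:
  fixes p :: "'a::comm_semiring_1 poly"
  assumes "degree p \<le> N" "coeff p 0 = 0"
  shows "(\<Sum>k<N. coeff p (N - k) * x ^ (N - k)) = poly p x"
proof -
  have "poly p x = (\<Sum>i\<le>degree p. coeff p i * x ^ i)" by (rule poly_altdef)
  also have "\<dots> = (\<Sum>i\<le>N. coeff p i * x ^ i)"
    by (rule sum.mono_neutral_left) (use assms in \<open>auto simp: coeff_eq_0\<close>)
  also have "\<dots> = (\<Sum>i\<in>{1..N}. coeff p i * x ^ i)"
    by (rule sum.mono_neutral_right) (use assms in \<open>auto simp: not_le\<close>)
  also have "\<dots> = (\<Sum>k<N. coeff p (N - k) * x ^ (N - k))"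
    by (rule sum.reindex_bij_witness[of _ "\<lambda>i. N - i" "\<lambda>k. N - k"]) auto
  finally show ?thesis by simp
qed

lemma resultant_quadratic:
  fixes f :: "'a::idom poly" and a b :: 'a
  assumes ab: "a \<noteq> b" "a * b \<noteq> 0"
  shows "resultant f ([:-a,1:]*[:-b,1:]) = poly f a * poly f b"
proof -
  define g where "g = [:-a,1:]*[:-b,1:]"
  have g: "g = [:a*b, -(a+b), 1:]" unfolding g_def by (simp add: algebra_simps)
  have dg: "degree g = 2" unfolding g by simp
  define m where "m = degree f"
  define N where "N = m + 2"
  define S where "S = sylvester_mat f g"
  have S: "S \<in> carrier_mat N N" unfolding S_def N_def m_def using dg sylvester_carrier_mat by auto
  define rowp where "rowp i = (if i < 2 then monom 1 (2 - i) * f else monom 1 (N - i) * g)" for i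
  have Sidx: "S $$ (i,j) = coeff (rowp i) (N - j)" if "i < N" "j < N" for i j
    unfolding S_def rowp_def using sylvester_index_mat2[of i f g j] that dg unfolding N_def m_def
    by (simp add: add.commute)
  have Sidx1: "S $$ (i,j) = (if i < 2 then
       if i \<le> j \<and> j - i \<le> m then coeff f (m + i - j) else 0
     else if i - 2 \<le> j \<and> j \<le> i then coeff g (i - j) else 0)" if "i < N" "j < N" for i j
    unfolding S_def using sylvester_index_mat[of i f g j] that dg unfolding N_def m_def
    by (simp add: add.commute)
  have rowdeg: "degree (rowp i) \<le> N" "coeff (rowp i) 0 = 0" if "i < N" for i
  proof -
    show "degree (rowp i) \<le> N"
      unfolding rowp_def using that dg
      by (auto simp: degree_monom_eq N_def m_def intro!: order.trans[OF degree_mult_le])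
    show "coeff (rowp i) 0 = 0" unfolding rowp_def using that by (auto simp: coeff_monom_mult)
  qed
  have polyrow: "poly (rowp i) x = (if i < 2 then x ^ (2 - i) * poly f x else x ^ (N - i) * poly g x)" for i x
    unfolding rowp_def by (simp add: poly_monom)
  have ga: "poly g a = 0" "poly g b = 0" unfolding g_def by simp_all
  define M where "M = mat N N (\<lambda>(i,j). if j = 0 then a^(N-i) else if j = 1 then b^(N-i) else if i = j then 1 else (0::'a))"
  have M: "M \<in> carrier_mat N N" unfolding M_def by simp
  have SM: "(S * M) $$ (i,j) = (if j = 0 then poly (rowp i) a else if j = 1 then poly (rowp i) b else S $$ (i,j))"
    if "i < N" "j < N" for i j
  proof -
    have "(S * M) $$ (i,j) = (\<Sum>k<N. S $$ (i,k) * M $$ (k,j))"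
      using S M that by (auto simp: scalar_prod_def lessThan_atLeast0 intro!: sum.cong)
    also have "\<dots> = (if j = 0 then poly (rowp i) a else if j = 1 then poly (rowp i) b else S $$ (i,j))"
    proof (cases "j = 0 \<or> j = 1")
      case True
      then show ?thesis
        using sum_rev_poly[OF rowdeg[OF that(1)], of a] sum_rev_poly[OF rowdeg[OF that(1)], of b] that
        by (auto simp: Sidx M_def intro!: sum.cong)
    next
      case False
      then have "(\<Sum>k<N. S $$ (i,k) * M $$ (k,j)) = (\<Sum>k<N. if k = j then S $$ (i,j) else 0)"
        using that by (intro sum.cong) (auto simp: M_def)
      also have "\<dots> = S $$ (i,j)" using that by simp
      finally show ?thesis using False by simp
    qed
    finally show ?thesis .
  qed
  define F where "F = mat 2 2 (\<lambda>(i,j). if j = 0 then a^(2-i) * poly f a else b^(2-i) * poly f b)"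
  define X where "X = mat 2 m (\<lambda>(i,j). S $$ (i, j+2))"
  define L where "L = mat m m (\<lambda>(i,j). S $$ (i+2, j+2))"
  have SM4: "S * M = four_block_mat F X (0\<^sub>m m 2) L"
  proof (rule eq_matI)
    show "dim_row (S * M) = dim_row (four_block_mat F X (0\<^sub>m m 2) L)"
      using S by (simp add: F_def L_def N_def)
    show "dim_col (S * M) = dim_col (four_block_mat F X (0\<^sub>m m 2) L)"
      using M by (simp add: F_def L_def N_def)
    fix i j assume ij: "i < dim_row (four_block_mat F X (0\<^sub>m m 2) L)" "j < dim_col (four_block_mat F X (0\<^sub>m m 2) L)"
    then have ij': "i < N" "j < N" by (auto simp: F_def L_def N_def)
    have ss: "Suc (Suc (x - 2)) = x" if "\<not> x < 2" for x :: nat using that by simp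
    show "(S * M) $$ (i,j) = four_block_mat F X (0\<^sub>m m 2) L $$ (i,j)"
      using ij ij' unfolding SM[OF ij'] 
      by (auto simp: F_def X_def L_def polyrow ga N_def ss)
  qed
  have detL: "det L = (a*b)^m"
  proof -
    have "det L = prod_list (diag_mat L)"
      by (rule det_lower_triangular[of m]) (auto simp: L_def Sidx1 N_def)
    also have "\<dots> = (\<Prod>i = 0..<m. a*b)" unfolding prod_list_diag_prod
      by (rule prod.cong) (auto simp: L_def Sidx1 N_def g)
    finally show ?thesis by simp
  qed
  have detF: "det F = a*b*(a-b) * (poly f a * poly f b)"
    by (subst det2) (auto simp: F_def algebra_simps power2_eq_square)
  have detSM: "det (S * M) = a*b*(a-b) * (poly f a * poly f b) * (a*b)^m"
  proof -
    have "det (S * M) = det F * det L" unfolding SM4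
      by (rule det_four_block_mat_lower_left_zero) (auto simp: F_def X_def L_def)
    then show ?thesis using detL detF by simp
  qed
  define V where "V = mat 2 2 (\<lambda>(i,j). if j = 0 then a^(N-i) else b^(N-i))"
  define W where "W = mat m 2 (\<lambda>(i,j). if j = 0 then a^(m-i) else b^(m-i))"
  have M4: "M = four_block_mat V (0\<^sub>m 2 m) W (1\<^sub>m m)"
    by (rule eq_matI) (auto simp: M_def V_def W_def N_def)
  have detV: "det V = (a*b)^(m+1) * (a-b)"
    by (subst det2) (auto simp: V_def N_def algebra_simps power2_eq_square power_mult_distrib)
  have detM: "det M = (a*b)^(m+1) * (a-b)"
  proof -
    have "det M = det V * det (1\<^sub>m m)" unfolding M4
      by (rule det_four_block_mat_upper_right_zero) (auto simp: V_def W_def)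
    then show ?thesis using detV by simp
  qed
  have "det S * ((a*b)^(m+1) * (a-b)) = (poly f a * poly f b) * ((a*b)^(m+1) * (a-b))"
    using det_mult[OF S M] detSM detM by (simp add: algebra_simps)
  moreover have "(a*b)^(m+1) * (a-b) \<noteq> 0" using ab by simp
  ultimately have "det S = poly f a * poly f b" by simp
  then show ?thesis unfolding resultant_def S_def g_def .
qed

definition TT :: "rat poly" where "TT = [:-7, 0, -1:]"
definition HH :: "rat poly" where "HH = [:1, 7, -1, 1:]"
definition NEG :: "rat poly" where "NEG = [:0, -1:]"

lemma poly_const_map: "poly (map_poly (\<lambda>a. [:a:]) p) q = pcompose p q"
  by (induction p) (auto simp: map_poly_pCons pcompose_pCons algebra_simps)

lemma key_identity:
  "pcompose (Delta_tilde k) TT = Gamma k * pcompose (Gamma k) NEG"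
proof -
  define F where "F = map_poly (\<lambda>a. [:a:]) (cyclotomic k)"
  define A where "A = HH"
  define B where "B = pcompose HH NEG"
  have mapF: "map_poly (\<lambda>p. pcompose p TT) F = F"
    unfolding F_def by (subst map_poly_map_poly) (auto simp: o_def)
  have c0: "pcompose (varC^3 + 8*varC^2 + 16*varC + 64) TT = A * B"
  proof (rule poly_eq_poly_eq_iff[THEN iffD1], rule ext)
    fix x :: rat
    show "poly (pcompose (varC^3 + 8*varC^2 + 16*varC + 64) TT) x = poly (A * B) x"
      unfolding A_def B_def TT_def HH_def NEG_def varC_def
      by (simp add: poly_pcompose power3_eq_cube power2_eq_square algebra_simps)
  qed
  have c1: "pcompose (-(2*varC + 16)) TT = -(A + B)"
  proof (rule poly_eq_poly_eq_iff[THEN iffD1], rule ext)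
    fix x :: rat
    show "poly (pcompose (-(2*varC + 16)) TT) x = poly (-(A + B)) x"
      unfolding A_def B_def TT_def HH_def NEG_def varC_def
      by (simp add: poly_pcompose power3_eq_cube power2_eq_square algebra_simps)
  qed
  have mapd: "map_poly (\<lambda>p. pcompose p TT) delta3 = [:-A,1:] * [:-B,1:]"
  proof -
    have prodAB: "[:-A,1:] * [:-B,1:] = [:A*B, -(A+B), 1:]" by (simp add: algebra_simps)
    show ?thesis unfolding delta3_def prodAB using c0 c1 by (simp add: map_poly_pCons)
  qed
  have "pcompose (Delta_tilde k) TT = resultant (map_poly (\<lambda>p. pcompose p TT) F) (map_poly (\<lambda>p. pcompose p TT) delta3)"
    unfolding Delta_tilde_def F_def[symmetric]
    by (rule pcompose_hom.resultant_map_poly[symmetric]) (auto simp: mapF mapd delta3_def)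
  also have "\<dots> = resultant F ([:-A,1:] * [:-B,1:])" unfolding mapF mapd ..
  also have "\<dots> = poly F A * poly F B"
  proof (rule resultant_quadratic)
    have "A - B \<noteq> 0" unfolding A_def B_def HH_def NEG_def by (simp add: pcompose_pCons)
    then show "A \<noteq> B" by simp
    have "A \<noteq> 0" "B \<noteq> 0" unfolding A_def B_def HH_def NEG_def by (simp_all add: pcompose_pCons)
    then show "A * B \<noteq> 0" by simp
  qed
  also have "\<dots> = Gamma k * pcompose (Gamma k) NEG"
    unfolding F_def poly_const_map Gamma_def A_def B_def HH_def pcompose_assoc ..
  finally show ?thesis .
qed

definition NormP :: "rat poly \<Rightarrow> rat poly" where
  "NormP A = resultant (map_poly (\<lambda>a. [:a:]) A) [:[:7,1:], 0, 1:]"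

lemma norm_identity: "pcompose (NormP A) TT = A * pcompose A NEG"
proof -
  define F where "F = map_poly (\<lambda>a. [:a:]) A"
  define X :: "rat poly" where "X = [:0,1:]"
  have mapF: "map_poly (\<lambda>p. pcompose p TT) F = F"
    unfolding F_def by (subst map_poly_map_poly) (auto simp: o_def)
  have mapq: "map_poly (\<lambda>p. pcompose p TT) [:[:7,1:], 0, 1:] = [:-X,1:] * [:-(-X),1:]"
    by (simp add: map_poly_pCons X_def TT_def pcompose_pCons)
  have "pcompose (NormP A) TT = resultant (map_poly (\<lambda>p. pcompose p TT) F) (map_poly (\<lambda>p. pcompose p TT) [:[:7,1:], 0, 1:])"
    unfolding NormP_def F_def[symmetric]
    by (rule pcompose_hom.resultant_map_poly[symmetric]) (auto simp: mapF mapq X_def)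
  also have "\<dots> = resultant F ([:-X,1:] * [:-(-X),1:])" unfolding mapF mapq ..
  also have "\<dots> = poly F X * poly F (-X)"
    by (rule resultant_quadratic) (auto simp: X_def)
  also have "\<dots> = A * pcompose A NEG"
    unfolding F_def poly_const_map X_def NEG_def by simp
  finally show ?thesis .
qed

abbreviation mc :: "rat poly \<Rightarrow> complex poly" where "mc p \<equiv> map_poly of_rat p"

lemma mc_mult: "mc (p * q) = mc p * mc q"
proof -
  interpret m: map_poly_comm_ring_hom "of_rat :: rat \<Rightarrow> complex" ..
  show ?thesis by (rule m.hom_mult)
qed

lemma poly_mc_pcompose: "poly (mc (pcompose p q)) z = poly (mc p) (poly (mc q) z)"
  by (simp add: of_rat_hom.map_poly_pcompose poly_pcompose)

lemma eval_G: "poly (mc (Gamma k)) z = poly (mc (cyclotomic k)) (z^3 - z^2 + 7*z + 1)"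
  unfolding Gamma_def poly_mc_pcompose
  by (simp add: map_poly_pCons algebra_simps power2_eq_square power3_eq_cube)

lemma eval_D: "poly (mc (Delta_tilde k)) (-(z^2) - 7) = poly (mc (Gamma k)) z * poly (mc (Gamma k)) (-z)"
proof -
  have "poly (mc (pcompose (Delta_tilde k) TT)) z = poly (mc (Gamma k * pcompose (Gamma k) NEG)) z"
    by (simp only: key_identity)
  then have "poly (mc (Delta_tilde k)) (poly (mc TT) z) = poly (mc (Gamma k)) z * poly (mc (Gamma k)) (poly (mc NEG) z)"
    by (simp only: poly_mc_pcompose mc_mult poly_mult)
  moreover have "poly (mc TT) z = -(z^2) - 7" by (simp add: TT_def map_poly_pCons power2_eq_square)
  moreover have "poly (mc NEG) z = -z" by (simp add: NEG_def map_poly_pCons)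
  ultimately show ?thesis by simp
qed

lemma prim_norm: "z \<in> prim k \<Longrightarrow> 0 < k \<Longrightarrow> cmod z = 1"
  unfolding prim_def using power_eq_1_iff[of z k] by auto

lemma one_notin_prim: "2 \<le> k \<Longrightarrow> (1::complex) \<notin> prim k"
  unfolding prim_def by auto

lemma G0: "2 \<le> k \<Longrightarrow> poly (mc (Gamma k)) 0 \<noteq> 0"
  unfolding eval_G using cyclotomic_roots[of k 1] one_notin_prim[of k] by simp

lemma parallelogram: "cmod (x + y) ^ 2 + cmod (x - y) ^ 2 = 2 * cmod x ^ 2 + 2 * cmod y ^ 2"
  unfolding cmod_power2 by (simp add: power2_eq_square algebra_simps)

lemma no_opposite:
  assumes k: "2 \<le> k" and r1: "poly (mc (Gamma k)) z = 0" and r2: "poly (mc (Gamma k)) (-z) = 0"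
  shows False
proof -
  define z1 where "z1 = z^3 - z^2 + 7*z + 1"
  define z2 where "z2 = (-z)^3 - (-z)^2 + 7*(-z) + 1"
  have k0: "0 < k" using k by simp
  have p1: "z1 \<in> prim k" using r1 unfolding eval_G z1_def using cyclotomic_roots[OF k0] by simp
  have p2: "z2 \<in> prim k" using r2 unfolding eval_G z2_def using cyclotomic_roots[OF k0] by simp
  have n1: "cmod z1 = 1" using prim_norm[OF p1 k0] .
  have n2: "cmod z2 = 1" using prim_norm[OF p2 k0] .
  define a where "a = z^2"
  have s: "z1 + z2 = 2 * (1 - a)" unfolding z1_def z2_def a_def by (simp add: algebra_simps power2_eq_square power3_eq_cube)
  have d: "z1 - z2 = 2 * z * (a + 7)" unfolding z1_def z2_def a_def by (simp add: algebra_simps power2_eq_square power3_eq_cube)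
  have "cmod (z1 + z2) ^ 2 + cmod (z1 - z2) ^ 2 = 4" using parallelogram[of z1 z2] n1 n2 by simp
  moreover have "cmod (z1 + z2) = 2 * cmod (1 - a)" unfolding s norm_mult by simp
  moreover have "cmod (z1 - z2) = 2 * cmod z * cmod (a + 7)" unfolding d norm_mult by simp
  ultimately have "4 * cmod (1 - a) ^ 2 + 4 * (cmod z ^ 2) * cmod (a + 7) ^ 2 = 4"
    by (simp add: power_mult_distrib)
  moreover have "cmod z ^ 2 = cmod a" unfolding a_def by (simp add: norm_power)
  ultimately have E: "cmod (1 - a) ^ 2 + cmod a * cmod (a + 7) ^ 2 = 1" by simp
  define r where "r = cmod a"
  have r0: "0 \<le> r" unfolding r_def by simp
  have h1: "(1 - r) ^ 2 \<le> cmod (1 - a) ^ 2"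
  proof -
    have "\<bar>1 - r\<bar> \<le> cmod (1 - a)" using norm_triangle_ineq3[of 1 a] unfolding r_def by simp
    then have "\<bar>1 - r\<bar> ^ 2 \<le> cmod (1 - a) ^ 2" by (rule power_mono) simp
    then show ?thesis by simp
  qed
  have h2: "(r - 7) ^ 2 \<le> cmod (a + 7) ^ 2"
  proof -
    have "\<bar>r - 7\<bar> \<le> cmod (a + 7)" using norm_triangle_ineq3[of a "-7"] unfolding r_def by simp
    then have "\<bar>r - 7\<bar> ^ 2 \<le> cmod (a + 7) ^ 2" by (rule power_mono) simp
    then show ?thesis by simp
  qed
  have "r * (r - 7) ^ 2 \<le> r * cmod (a + 7) ^ 2" using mult_left_mono[OF h2 r0] .
  with E h1 have I: "(1 - r) ^ 2 + r * (r - 7) ^ 2 \<le> 1" unfolding r_def by linarith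
  have eq: "(1 - r) ^ 2 + r * (r - 7) ^ 2 - 1 = r * ((r - 13/2) ^ 2 + 19/4)"
    by (simp add: algebra_simps power2_eq_square)
  have pos: "0 < (r - 13/2) ^ 2 + 19/4" by (simp add: add_nonneg_pos)
  have "r * ((r - 13/2) ^ 2 + 19/4) \<le> 0" using I eq by linarith
  then have "r \<le> 0" using pos by (simp add: mult_le_0_iff)
  then have "r = 0" using r0 by simp
  then have "z = 0" unfolding r_def a_def by simp
  then have "z1 = 1" unfolding z1_def by simp
  then show False using p1 one_notin_prim[OF k] by simp
qed


lemma coprime_no_common_root:
  fixes p q :: "rat poly"
  assumes p: "p \<noteq> 0" and nc: "\<And>z. poly (mc p) z = 0 \<Longrightarrow> poly (mc q) z \<noteq> 0"
  shows "coprime p q"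
proof -
  define d where "d = gcd p q"
  have d0: "d \<noteq> 0" unfolding d_def using p by simp
  show ?thesis
  proof (cases "degree d = 0")
    case True
    then have "is_unit d" using is_unit_iff_degree[OF d0] by simp
    then show ?thesis unfolding d_def is_unit_gcd .
  next
    case False
    then have "degree (mc d) \<noteq> 0" by simp
    then have "\<not> constant (poly (mc d))" by (simp add: constant_degree)
    then obtain z where z: "poly (mc d) z = 0" using fundamental_theorem_of_algebra by blast
    have "d dvd p" unfolding d_def by simp
    then obtain c where "p = d * c" by (elim dvdE)
    then have "poly (mc p) z = 0" using z by (simp add: mc_mult)
    moreover have "d dvd q" unfolding d_def by simp
    then obtain c' where "q = d * c'" by (elim dvdE)
    then have "poly (mc q) z = 0" using z by (simp add: mc_mult)
    ultimately show ?thesis using nc by blast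
  qed
qed

lemma degTT: "degree TT = 2" unfolding TT_def by simp
lemma degNEG: "degree NEG = 1" unfolding NEG_def by simp
lemma TT_NEG: "pcompose TT NEG = TT" unfolding TT_def NEG_def by (simp add: pcompose_pCons)

lemma Gamma_nz: "2 \<le> k \<Longrightarrow> Gamma k \<noteq> 0"
  using G0[of k] by auto

lemma Delta_nz:
  assumes "2 \<le> k" shows "Delta_tilde k \<noteq> 0"
proof
  assume "Delta_tilde k = 0"
  then have "poly (mc (Delta_tilde k)) (-(0^2) - 7) = 0" by simp
  then show False unfolding eval_D using G0[OF assms] by simp
qed

lemma deg_eq:
  assumes "2 \<le> k" shows "degree (Delta_tilde k) = degree (Gamma k)"
proof -
  have G: "Gamma k \<noteq> 0" using Gamma_nz[OF assms] .
  have GN: "pcompose (Gamma k) NEG \<noteq> 0" using G pcompose_eq_0[of "Gamma k" NEG] degNEG by auto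
  have "degree (pcompose (Delta_tilde k) TT) = degree (Gamma k * pcompose (Gamma k) NEG)"
    by (simp only: key_identity)
  then have "degree (Delta_tilde k) * 2 = degree (Gamma k) + degree (Gamma k)"
    using G GN by (simp add: degree_pcompose degree_mult_eq degTT degNEG)
  then show ?thesis by simp
qed

lemma coprime_G:
  assumes k: "2 \<le> k" shows "coprime (Gamma k) (pcompose (Gamma k) NEG)"
proof (rule coprime_no_common_root)
  show "Gamma k \<noteq> 0" using Gamma_nz[OF k] .
  fix z assume "poly (mc (Gamma k)) z = 0"
  then show "poly (mc (pcompose (Gamma k) NEG)) z \<noteq> 0"
    using no_opposite[OF k, of z] by (auto simp: poly_mc_pcompose NEG_def map_poly_pCons)
qed

lemma dvd_both:
  assumes k: "2 \<le> k" and dv: "Gamma k dvd pcompose X TT"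
  shows "Gamma k * pcompose (Gamma k) NEG dvd pcompose X TT"
proof (rule divides_mult[OF dv _ coprime_G[OF k]])
  from dv obtain c where c: "pcompose X TT = Gamma k * c" by (elim dvdE)
  have "pcompose X TT = pcompose (pcompose X TT) NEG"
    by (simp add: pcompose_assoc[symmetric] TT_NEG)
  also have "\<dots> = pcompose (Gamma k) NEG * pcompose c NEG" unfolding c by (simp add: pcompose_mult)
  finally show "pcompose (Gamma k) NEG dvd pcompose X TT" by simp
qed

lemma irr_G_imp_D:
  assumes k: "2 \<le> k" and irr: "irreducible (Gamma k)"
  shows "irreducible (Delta_tilde k)"
proof (rule irreducibleI)
  have G: "Gamma k \<noteq> 0" using Gamma_nz[OF k] .
  have GN: "pcompose (Gamma k) NEG \<noteq> 0" using G pcompose_eq_0[of "Gamma k" NEG] degNEG by auto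
  have degG: "degree (Gamma k) \<noteq> 0" using irreducible_not_unit[OF irr] is_unit_iff_degree[OF G] by blast
  show D: "Delta_tilde k \<noteq> 0" using Delta_nz[OF k] .
  show "\<not> Delta_tilde k dvd 1" using is_unit_iff_degree[OF D] deg_eq[OF k] degG by simp
  fix A B assume AB: "Delta_tilde k = A * B"
  then have A0: "A \<noteq> 0" and B0: "B \<noteq> 0" using D by auto
  have A0': "pcompose A TT \<noteq> 0" using A0 pcompose_eq_0[of A TT] degTT by auto
  have B0': "pcompose B TT \<noteq> 0" using B0 pcompose_eq_0[of B TT] degTT by auto
  have prod: "pcompose A TT * pcompose B TT = Gamma k * pcompose (Gamma k) NEG"
    using key_identity[of k] unfolding AB by (simp add: pcompose_mult)
  have pr: "prime_elem (Gamma k)" using irr by (simp add: prime_elem_iff_irreducible)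
  have "Gamma k dvd pcompose A TT * pcompose B TT" unfolding prod by simp
  then have "Gamma k dvd pcompose A TT \<or> Gamma k dvd pcompose B TT"
    using prime_elem_dvd_multD[OF pr] by blast
  have dG: "degree (Gamma k * pcompose (Gamma k) NEG) = degree A * 2 + degree B * 2"
    unfolding prod[symmetric] using A0' B0' by (simp add: degree_mult_eq degree_pcompose degTT)
  have dG2: "degree (Gamma k * pcompose (Gamma k) NEG) = degree (Gamma k) * 2"
    using G GN by (simp add: degree_mult_eq degree_pcompose degNEG)
  have dD: "degree (Gamma k) = degree A + degree B" using deg_eq[OF k] AB D by (simp add: degree_mult_eq)
  from \<open>Gamma k dvd pcompose A TT \<or> Gamma k dvd pcompose B TT\<close>
  show "A dvd 1 \<or> B dvd 1"
  proof
    assume "Gamma k dvd pcompose A TT"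
    then have "Gamma k * pcompose (Gamma k) NEG dvd pcompose A TT" by (rule dvd_both[OF k])
    then have "degree (Gamma k * pcompose (Gamma k) NEG) \<le> degree (pcompose A TT)"
      using A0' by (rule dvd_imp_degree_le)
    then have "degree B = 0" using dG2 dD by (simp add: degree_pcompose degTT)
    then show ?thesis using is_unit_iff_degree[OF B0] by simp
  next
    assume "Gamma k dvd pcompose B TT"
    then have "Gamma k * pcompose (Gamma k) NEG dvd pcompose B TT" by (rule dvd_both[OF k])
    then have "degree (Gamma k * pcompose (Gamma k) NEG) \<le> degree (pcompose B TT)"
      using B0' by (rule dvd_imp_degree_le)
    then have "degree A = 0" using dG2 dD by (simp add: degree_pcompose degTT)
    then show ?thesis using is_unit_iff_degree[OF A0] by simp
  qed
qed

lemma NormP_unit_imp: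
  assumes A0: "A \<noteq> 0" and u: "NormP A dvd 1"
  shows "A dvd 1"
proof -
  have N0: "NormP A \<noteq> 0" using u by auto
  have "degree (NormP A) = 0" using is_unit_iff_degree[OF N0] u by simp
  then have "degree (pcompose (NormP A) TT) = 0" by (simp add: degree_pcompose)
  then have "degree (A * pcompose A NEG) = 0" unfolding norm_identity .
  moreover have "pcompose A NEG \<noteq> 0" using A0 pcompose_eq_0[of A NEG] degNEG by auto
  ultimately have "degree A = 0" using A0 by (simp add: degree_mult_eq degree_pcompose degNEG)
  then show ?thesis using is_unit_iff_degree[OF A0] by simp
qed

lemma irr_D_imp_G:
  assumes k: "2 \<le> k" and irr: "irreducible (Delta_tilde k)"
  shows "irreducible (Gamma k)"
proof (rule irreducibleI)
  show G: "Gamma k \<noteq> 0" using Gamma_nz[OF k] .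
  have D: "Delta_tilde k \<noteq> 0" using Delta_nz[OF k] .
  have "degree (Delta_tilde k) \<noteq> 0" using irreducible_not_unit[OF irr] is_unit_iff_degree[OF D] by blast
  then show "\<not> Gamma k dvd 1" using is_unit_iff_degree[OF G] deg_eq[OF k] by simp
  fix A B assume AB: "Gamma k = A * B"
  then have A0: "A \<noteq> 0" and B0: "B \<noteq> 0" using G by auto
  have "pcompose (Delta_tilde k) TT = (A * pcompose A NEG) * (B * pcompose B NEG)"
    unfolding key_identity AB by (simp add: pcompose_mult algebra_simps)
  also have "\<dots> = pcompose (NormP A * NormP B) TT"
    by (simp add: pcompose_mult norm_identity)
  finally have "pcompose (Delta_tilde k - NormP A * NormP B) TT = 0" by (simp add: pcompose_diff)
  then have "Delta_tilde k - NormP A * NormP B = 0" by (rule pcompose_eq_0) (simp add: degTT)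
  then have "Delta_tilde k = NormP A * NormP B" by simp
  then have "NormP A dvd 1 \<or> NormP B dvd 1" using irreducibleD[OF irr] by blast
  then show "A dvd 1 \<or> B dvd 1" using NormP_unit_imp A0 B0 by blast
qed


lemma alg_of_int: "algebraic (of_int n :: complex)"
proof (rule algebraicI[of "[:-of_int n, 1:]"])
  show "coeff [:-of_int n, 1:] i \<in> \<int>" for i
    by (cases i) (auto simp: coeff_pCons split: nat.split)
qed auto

lemma alg_of_nat: "algebraic (of_nat n :: complex)"
  using alg_of_int[of "int n"] by simp

lemma alg_root_mc:
  assumes "mc p \<noteq> 0" "poly (mc p) x = 0" shows "algebraic x"
proof (rule algebraicI'[OF _ assms])
  show "coeff (mc p) i \<in> \<rat>" for i by (simp add: coeff_map_poly)
qed

lemma galois_part: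
  assumes k: "2 \<le> k" and s: "\<sigma> \<in> galois_Qbar" and a: "poly (mc (Gamma k)) a = 0"
  shows "\<sigma> (- (a ^ 2) - 7) = - ((\<sigma> a) ^ 2) - 7"
proof -
  have bij: "bij_betw \<sigma> {z. algebraic z} {z. algebraic z}"
    and hom: "\<And>x y. algebraic x \<Longrightarrow> algebraic y \<Longrightarrow> \<sigma> (x + y) = \<sigma> x + \<sigma> y \<and> \<sigma> (x * y) = \<sigma> x * \<sigma> y"
    using s unfolding galois_Qbar_def by auto
  have add: "\<sigma> (x + y) = \<sigma> x + \<sigma> y" if "algebraic x" "algebraic y" for x y using hom[OF that] by blast
  have mul: "\<sigma> (x * y) = \<sigma> x * \<sigma> y" if "algebraic x" "algebraic y" for x y using hom[OF that] by blast
  have s0: "\<sigma> 0 = 0" using add[of 0 0] by simp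
  have sneg: "\<sigma> (- x) = - \<sigma> x" if "algebraic x" for x
  proof -
    have "\<sigma> (x + - x) = \<sigma> x + \<sigma> (- x)" using add[of x "-x"] that by simp
    then show ?thesis using s0 by (simp add: eq_neg_iff_add_eq_0 add.commute)
  qed
  have alg1: "algebraic (1::complex)" using alg_of_nat[of 1] by simp
  have s1: "\<sigma> 1 = 1"
  proof -
    have "1 \<in> \<sigma> ` {z. algebraic z}" using bij alg1 unfolding bij_betw_def by auto
    then obtain w where w: "algebraic w" "\<sigma> w = 1" by auto
    have "\<sigma> (1 * w) = \<sigma> 1 * \<sigma> w" using mul[OF alg1 w(1)] .
    then show ?thesis using w by simp
  qed
  have snat: "\<sigma> (of_nat n) = of_nat n" for n
  proof (induction n)
    case 0 then show ?case using s0 by simp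
  next
    case (Suc n)
    have "\<sigma> (of_nat (Suc n)) = \<sigma> (1 + of_nat n)" by simp
    also have "\<dots> = \<sigma> 1 + \<sigma> (of_nat n)" using add[OF alg1 alg_of_nat] .
    finally show ?case using Suc s1 by simp
  qed
  have s7: "\<sigma> 7 = 7" using snat[of 7] by simp
  have alg7: "algebraic (7::complex)" using alg_of_nat[of 7] by simp
  have G0': "mc (Gamma k) \<noteq> 0" using G0[OF k] by auto
  have alga: "algebraic a" by (rule alg_root_mc[OF G0' a])
  define P :: "rat poly" where "P = pcompose (Delta_tilde k) [:-7, -1:]"
  have evP: "poly (mc P) y = poly (mc (Delta_tilde k)) (- y - 7)" for y
    unfolding P_def poly_mc_pcompose by (simp add: map_poly_pCons algebra_simps)
  have "poly (mc P) 0 = poly (mc (Gamma k)) 0 * poly (mc (Gamma k)) (- 0)"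
    using evP[of 0] eval_D[of k 0] by simp
  then have P0: "mc P \<noteq> 0" using G0[OF k] by auto
  have "poly (mc P) (a ^ 2) = 0" using evP[of "a^2"] eval_D[of k a] a by simp
  then have alga2: "algebraic (a ^ 2)" by (rule alg_root_mc[OF P0])
  have "\<sigma> (- (a ^ 2) - 7) = \<sigma> (- (a ^ 2) + - 7)" by simp
  also have "\<dots> = \<sigma> (- (a ^ 2)) + \<sigma> (- 7)" by (rule add) (simp_all add: alga2 alg7)
  also have "\<sigma> (- (a ^ 2)) = - \<sigma> (a ^ 2)" using sneg[OF alga2] .
  also have "\<sigma> (a ^ 2) = \<sigma> a * \<sigma> a" using mul[OF alga alga] by (simp add: power2_eq_square)
  also have "\<sigma> (- 7) = - 7" using sneg[OF alg7] s7 by simp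
  finally show ?thesis by (simp add: power2_eq_square)
qed

theorem lemma2p9:
  fixes k :: nat
  assumes "k \<ge> 2"
  shows "bij_betw (\<lambda>a::complex. - (a ^ 2) - 7) (complex_roots (Gamma k)) (complex_roots (Delta_tilde k))
    \<and> (\<forall>\<sigma>\<in>galois_Qbar. \<forall>a\<in>complex_roots (Gamma k). \<sigma> (- (a ^ 2) - 7) = - ((\<sigma> a) ^ 2) - 7)
    \<and> (irreducible (Delta_tilde k) \<longleftrightarrow> irreducible (Gamma k))"
proof (intro conjI)
  have k: "2 \<le> k" using assms .
  have RG: "complex_roots (Gamma k) = {z. poly (mc (Gamma k)) z = 0}" unfolding complex_roots_def ..
  have RD: "complex_roots (Delta_tilde k) = {z. poly (mc (Delta_tilde k)) z = 0}" unfolding complex_roots_def ..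
  show "bij_betw (\<lambda>a::complex. - (a ^ 2) - 7) (complex_roots (Gamma k)) (complex_roots (Delta_tilde k))"
    unfolding bij_betw_def
  proof
    show "inj_on (\<lambda>a::complex. - (a ^ 2) - 7) (complex_roots (Gamma k))"
    proof (rule inj_onI)
      fix x y assume x: "x \<in> complex_roots (Gamma k)" and y: "y \<in> complex_roots (Gamma k)"
        and e: "- (x ^ 2) - 7 = - (y ^ 2) - (7::complex)"
      from e have "x ^ 2 = y ^ 2" by simp
      then have "x = y \<or> x = - y" by (simp add: power2_eq_iff)
      then show "x = y"
      proof
        assume "x = - y"
        then have False using no_opposite[OF k, of y] x y unfolding RG by simp
        then show "x = y" ..
      qed
    qed
    show "(\<lambda>a::complex. - (a ^ 2) - 7) ` complex_roots (Gamma k) = complex_roots (Delta_tilde k)"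
    proof
      show "(\<lambda>a::complex. - (a ^ 2) - 7) ` complex_roots (Gamma k) \<subseteq> complex_roots (Delta_tilde k)"
        unfolding RG RD using eval_D[of k] by auto
      show "complex_roots (Delta_tilde k) \<subseteq> (\<lambda>a::complex. - (a ^ 2) - 7) ` complex_roots (Gamma k)"
      proof
        fix c assume c: "c \<in> complex_roots (Delta_tilde k)"
        define w where "w = csqrt (- c - 7)"
        have w2: "w ^ 2 = - c - 7" unfolding w_def by simp
        have fw: "- (w ^ 2) - 7 = c" using w2 by simp
        have fw': "- ((- w) ^ 2) - 7 = c" using w2 by simp
        have "poly (mc (Gamma k)) w * poly (mc (Gamma k)) (- w) = 0"
          using c eval_D[of k w] unfolding RD fw by simp
        then have "poly (mc (Gamma k)) w = 0 \<or> poly (mc (Gamma k)) (- w) = 0" by simp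
        then show "c \<in> (\<lambda>a::complex. - (a ^ 2) - 7) ` complex_roots (Gamma k)"
        proof
          assume "poly (mc (Gamma k)) w = 0"
          then have "w \<in> complex_roots (Gamma k)" unfolding RG by simp
          then show ?thesis using fw by (auto intro: image_eqI[of _ _ w])
        next
          assume "poly (mc (Gamma k)) (- w) = 0"
          then have "- w \<in> complex_roots (Gamma k)" unfolding RG by simp
          then show ?thesis using fw' by (auto intro: image_eqI[of _ _ "- w"])
        qed
      qed
    qed
  qed
  show "\<forall>\<sigma>\<in>galois_Qbar. \<forall>a\<in>complex_roots (Gamma k). \<sigma> (- (a ^ 2) - 7) = - ((\<sigma> a) ^ 2) - 7"
    unfolding RG using galois_part[OF k] by blast
  show "irreducible (Delta_tilde k) \<longleftrightarrow> irreducible (Gamma k)"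
    using irr_G_imp_D[OF k] irr_D_imp_G[OF k] by blast
qed

end
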